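(* Let $s,k,T\in\mathbb{N}$ and let $\mathcal{D}$ be a distribution on $\{0,1\}^T$. Then \[ \mathbf{S}^{s,k}[\mathcal{D}]\le \Pr_{w\sim\mathcal{D}}[\text{slot } s \text{ is not } k\text{-settled for } w]. \]
   Context: Characteristic strings and forks. A characteristic string is $w=w_1\dots w_n\in\{0,1\}^n$; index $i$ is honest if $w_i=0$ and adversarial if $w_i=1$. A fork for $w$ is a rooted tree $F=(V,E)$ with edges directed away from the root $r$, together with a labeling $\ell:V\to\{0,\dots,n\}$, such that (F1) $\ell(r)=0$; (F2) labels strictly increase along every directed path; (F3) every honest index is the label of exactly one vertex; (F4) if $i<j$ are honest indices then the vertex labeled $i$ has strictly smaller depth than the vertex labeled $j$. Write $F\vdash w$. A tine is a directed path starting at the root; its length is its number of edges. For $x$ a prefix of $w$, $F\vdash x$, $F'\vdash w$, $F\sqsubseteq F'$ means $F$ is a subgraph of $F'$ with identical labels. Settlement. For $w\in\{0,1\}^n$ and a fork $F\vdash w_1\dots w_t$ with $s+k\le t\le n$, slot $s$ is not $k$-settled in $F$ if $F$ contains two tines of maximum length which either contain different vertices labeled $s$, or one contains a vertex labeled $s$ and the other does not; otherwise it is $k$-settled in $F$. Slot $s$ is $k$-settled for $w$ if it is $k$-settled in every fork $F\vdash w_1\dots w_t$ for every $t\ge s+k$. Settlement game. For a distribution $\mathcal{D}$ on $\{0,1\}^T$, the $(\mathcal{D},T;s,k)$-settlement game between an adversary $\mathcal{A}$ and a deterministic challenger: (1) $w\in\{0,1\}^T$ is drawn from $\mathcal{D}$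 and given to $\mathcal{A}$; (2) $A_0$ is the single-vertex fork for the empty string; (3) for $t=1,\dots,T$: (a) if $w_t=0$, the challenger forms $F_t\vdash w_1\dots w_t$ by adding one vertex labeled $t$ to the end of a longest path of $A_{t-1}$ (ties broken by $\mathcal{A}$); (b) if $w_t=1$, $\mathcal{A}$ chooses an arbitrary fork $F_t\vdash w_1\dots w_t$ with $A_{t-1}\sqsubseteq F_t$; (c) $\mathcal{A}$ chooses an arbitrary fork $A_t\vdash w_1\dots w_t$ with $F_t\sqsubseteq A_t$. $\mathcal{A}$ wins if slot $s$ is not $k$-settled in some $A_t$ with $t\ge s+k$. $\mathbf{S}^{s,k}[\mathcal{D}]=\max_{\mathcal{A}}\Pr[\mathcal{A}\text{ wins}]$. *)

theory Defs
  imports "HOL-Probability.Probability_Mass_Function"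
begin

text \<open>Characteristic strings are bool lists; True means adversarial (symbol 1),
  False means honest (symbol 0). Index i (1-based) corresponds to w ! (i - 1).\<close>

definition honest_idx :: "bool list \<Rightarrow> nat \<Rightarrow> bool" where
  "honest_idx w i \<longleftrightarrow> 1 \<le> i \<and> i \<le> length w \<and> \<not> w ! (i - 1)"

record fork =
  verts :: "nat set"
  edges :: "(nat \<times> nat) set"
  root  :: nat
  lab   :: "nat \<Rightarrow> nat"

definition is_tine :: "fork \<Rightarrow> nat list \<Rightarrow> bool" where
  "is_tine F p \<longleftrightarrow> p \<noteq> [] \<and> hd p = root F \<and> set p \<subseteq> verts F \<and>
     (\<forall>i. i + 1 < length p \<longrightarrow> (p ! i, p ! (i + 1)) \<in> edges F)"

definition tine_len :: "nat list \<Rightarrow> nat" where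
  "tine_len p = length p - 1"

definition is_fork :: "bool list \<Rightarrow> fork \<Rightarrow> bool" where
  "is_fork w F \<longleftrightarrow>
     \<comment> \<open>rooted tree with edges directed away from the root\<close>
     finite (verts F) \<and> root F \<in> verts F \<and> edges F \<subseteq> verts F \<times> verts F \<and>
     (\<forall>(u, v) \<in> edges F. v \<noteq> root F) \<and>
     (\<forall>v \<in> verts F - {root F}. \<exists>!u. (u, v) \<in> edges F) \<and>
     (\<forall>v \<in> verts F. \<exists>p. is_tine F p \<and> last p = v) \<and>
     \<comment> \<open>labels in {0..n}\<close>
     (\<forall>v \<in> verts F. lab F v \<le> length w) \<and>
     \<comment> \<open>(F1)\<close>
     lab F (root F) = 0 \<and>
     \<comment> \<open>(F2) labels strictly increase along edges, hence along directed paths\<close>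
     (\<forall>(u, v) \<in> edges F. lab F u < lab F v) \<and>
     \<comment> \<open>(F3)\<close>
     (\<forall>i. honest_idx w i \<longrightarrow> (\<exists>!v. v \<in> verts F \<and> lab F v = i)) \<and>
     \<comment> \<open>(F4) depth of a vertex = length of the tine ending in it\<close>
     (\<forall>i j p q. honest_idx w i \<and> honest_idx w j \<and> i < j \<and> is_tine F p \<and> is_tine F q \<and>
        lab F (last p) = i \<and> lab F (last q) = j \<longrightarrow> tine_len p < tine_len q)"

definition subfork :: "fork \<Rightarrow> fork \<Rightarrow> bool" where
  "subfork F F' \<longleftrightarrow> verts F \<subseteq> verts F' \<and> edges F \<subseteq> edges F' \<and>
     (\<forall>v \<in> verts F. lab F' v = lab F v)"

definition max_tine :: "fork \<Rightarrow> nat list \<Rightarrow> bool" where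
  "max_tine F p \<longleftrightarrow> is_tine F p \<and> (\<forall>q. is_tine F q \<longrightarrow> tine_len q \<le> tine_len p)"

definition not_settled_in :: "fork \<Rightarrow> nat \<Rightarrow> bool" where
  "not_settled_in F s \<longleftrightarrow> (\<exists>p q. max_tine F p \<and> max_tine F q \<and>
     ((\<exists>u \<in> set p. \<exists>v \<in> set q. lab F u = s \<and> lab F v = s \<and> u \<noteq> v) \<or>
      ((\<exists>u \<in> set p. lab F u = s) \<and> \<not> (\<exists>v \<in> set q. lab F v = s))))"

definition settled_for :: "bool list \<Rightarrow> nat \<Rightarrow> nat \<Rightarrow> bool" where
  "settled_for w s k \<longleftrightarrow>
     (\<forall>t F. s + k \<le> t \<and> t \<le> length w \<and> is_fork (take t w) F \<longrightarrow> \<not> not_settled_in F s)"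

definition valid_play :: "bool list \<Rightarrow> (nat \<Rightarrow> fork) \<Rightarrow> (nat \<Rightarrow> fork) \<Rightarrow> bool" where
  "valid_play w A F \<longleftrightarrow>
     verts (A 0) = {root (A 0)} \<and> edges (A 0) = {} \<and> lab (A 0) (root (A 0)) = 0 \<and>
     (\<forall>t. 1 \<le> t \<and> t \<le> length w \<longrightarrow>
        (\<not> w ! (t - 1) \<longrightarrow>
           (\<exists>p v. max_tine (A (t - 1)) p \<and> v \<notin> verts (A (t - 1)) \<and>
              verts (F t) = insert v (verts (A (t - 1))) \<and>
              edges (F t) = insert (last p, v) (edges (A (t - 1))) \<and>
              root (F t) = root (A (t - 1)) \<and>
              (\<forall>u \<in> verts (A (t - 1)). lab (F t) u = lab (A (t - 1)) u) \<and>
              lab (F t) v = t)) \<and>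
        (w ! (t - 1) \<longrightarrow> is_fork (take t w) (F t) \<and> subfork (A (t - 1)) (F t)) \<and>
        is_fork (take t w) (A t) \<and> subfork (F t) (A t))"

definition wins :: "nat \<Rightarrow> nat \<Rightarrow> bool list \<Rightarrow> (nat \<Rightarrow> fork) \<Rightarrow> bool" where
  "wins s k w A \<longleftrightarrow> (\<exists>t. s + k \<le> t \<and> t \<le> length w \<and> not_settled_in (A t) s)"

text \<open>An adversary sees the whole string w and then makes all its choices; a
  (deterministic) adversary is thus a map from strings to legal plays.\<close>
definition valid_adversary :: "nat \<Rightarrow> (bool list \<Rightarrow> (nat \<Rightarrow> fork) \<times> (nat \<Rightarrow> fork)) \<Rightarrow> bool" where
  "valid_adversary T adv \<longleftrightarrow>
     (\<forall>w. length w = T \<longrightarrow> valid_play w (fst (adv w)) (snd (adv w)))"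

definition settlement_value :: "bool list pmf \<Rightarrow> nat \<Rightarrow> nat \<Rightarrow> nat \<Rightarrow> real" where
  "settlement_value D T s k =
     (SUP adv \<in> {adv. valid_adversary T adv}.
        measure_pmf.prob D {w. wins s k w (fst (adv w))})"

end

theory Submission
  imports Defs
begin

lemma honest_snoc: "honest_idx (x @ [b]) i \<longleftrightarrow> honest_idx x i \<or> (i = Suc (length x) \<and> \<not> b)"
  unfolding honest_idx_def by (auto simp: nth_append le_Suc_eq)

lemma fp_fin: assumes "is_fork w F" shows "finite (verts F)"
  using assms unfolding is_fork_def by (elim conjE) assumption

lemma fp_root: assumes "is_fork w F" shows "root F \<in> verts F"
  using assms unfolding is_fork_def by (elim conjE) assumption

lemma fp_edges: assumes "is_fork w F" shows "edges F \<subseteq> verts F \<times> verts F"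
  using assms unfolding is_fork_def by (elim conjE) assumption

lemma fp_noroot: assumes "is_fork w F" shows "\<forall>(u, v) \<in> edges F. v \<noteq> root F"
  using assms unfolding is_fork_def by (elim conjE) assumption

lemma fp_par: assumes "is_fork w F" shows "\<forall>v \<in> verts F - {root F}. \<exists>!u. (u, v) \<in> edges F"
  using assms unfolding is_fork_def by (elim conjE) assumption

lemma fp_reach: assumes "is_fork w F" shows "\<forall>v \<in> verts F. \<exists>p. is_tine F p \<and> last p = v"
  using assms unfolding is_fork_def by (elim conjE) assumption

lemma fp_lab: assumes "is_fork w F" shows "\<forall>v \<in> verts F. lab F v \<le> length w"
  using assms unfolding is_fork_def by (elim conjE) assumption

lemma fp_lr: assumes "is_fork w F" shows "lab F (root F) = 0"
  using assms unfolding is_fork_def by (elim conjE) assumption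

lemma fp_inc: assumes "is_fork w F" shows "\<forall>(u, v) \<in> edges F. lab F u < lab F v"
  using assms unfolding is_fork_def by (elim conjE) assumption

lemma fp_f3: assumes "is_fork w F" shows "\<forall>i. honest_idx w i \<longrightarrow> (\<exists>!v. v \<in> verts F \<and> lab F v = i)"
  using assms unfolding is_fork_def by (elim conjE) assumption

lemma fp_f4: assumes "is_fork w F" shows "\<forall>i j p q. honest_idx w i \<and> honest_idx w j \<and> i < j \<and> is_tine F p \<and> is_tine F q \<and>
        lab F (last p) = i \<and> lab F (last q) = j \<longrightarrow> tine_len p < tine_len q"
  using assms unfolding is_fork_def by (elim conjE) assumption

lemma tine_single: "is_tine F [a] \<longleftrightarrow> a = root F \<and> a \<in> verts F"
  unfolding is_tine_def by auto

lemma tine_snoc: "p \<noteq> [] \<Longrightarrow> is_tine F (p @ [u]) \<longleftrightarrow> is_tine F p \<and> (last p, u) \<in> edges F \<and> u \<in> verts F"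
proof -
  assume ne: "p \<noteq> []"
  show ?thesis
  proof
    assume H: "is_tine F (p @ [u])"
    have "\<forall>i. i + 1 < length p \<longrightarrow> (p ! i, p ! (i + 1)) \<in> edges F"
    proof (intro allI impI)
      fix i assume "i + 1 < length p"
      with H show "(p ! i, p ! (i + 1)) \<in> edges F" unfolding is_tine_def
        by (metis (no_types, lifting) add_lessD1 length_append_singleton less_SucI nth_append)
    qed
    moreover have "(last p, u) \<in> edges F"
    proof -
      have "length p - 1 + 1 < length (p @ [u])" using ne by simp
      with H have "((p@[u]) ! (length p - 1), (p@[u]) ! (length p - 1 + 1)) \<in> edges F"
        unfolding is_tine_def by blast
      moreover have "(p@[u]) ! (length p - 1) = last p" using ne
        by (simp add: nth_append last_conv_nth)
      moreover have "(p@[u]) ! (length p - 1 + 1) = u" using ne by (simp add: nth_append)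
      ultimately show ?thesis by simp
    qed
    ultimately show "is_tine F p \<and> (last p, u) \<in> edges F \<and> u \<in> verts F"
      using H ne unfolding is_tine_def by auto
  next
    assume H: "is_tine F p \<and> (last p, u) \<in> edges F \<and> u \<in> verts F"
    have "\<forall>i. i + 1 < length (p@[u]) \<longrightarrow> ((p@[u]) ! i, (p@[u]) ! (i + 1)) \<in> edges F"
    proof (intro allI impI)
      fix i assume i: "i + 1 < length (p@[u])"
      show "((p@[u]) ! i, (p@[u]) ! (i + 1)) \<in> edges F"
      proof (cases "i + 1 < length p")
        case True then show ?thesis using H unfolding is_tine_def by (simp add: nth_append)
      next
        case False then have "i = length p - 1" using i by simp
        then show ?thesis using H ne by (simp add: nth_append last_conv_nth)
      qed
    qed
    then show "is_tine F (p @ [u])" using H ne unfolding is_tine_def by auto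
  qed
qed

lemma tine_cases: "is_tine F p \<Longrightarrow> p = [root F] \<or> (\<exists>q u. q \<noteq> [] \<and> p = q @ [u])"
  unfolding is_tine_def
  by (metis append_butlast_last_id hd_Nil_eq_last last_snoc list.sel(1) tl_append2 tl_Nil butlast.simps(2) append_self_conv2 list.collapse)

lemma tine_unique:
  assumes F: "is_fork x F"
  shows "is_tine F p \<Longrightarrow> is_tine F q \<Longrightarrow> last p = last q \<Longrightarrow> p = q"
proof (induction "length p" arbitrary: p q rule: less_induct)
  case less
  have noroot: "\<And>u. (u, root F) \<notin> edges F" using fp_noroot[OF F] by blast
  have uniq: "\<And>a u u'. (u, a) \<in> edges F \<Longrightarrow> (u', a) \<in> edges F \<Longrightarrow> u = u'"
  proof -
    fix a u u' assume "(u, a) \<in> edges F" "(u', a) \<in> edges F"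
    moreover have "a \<in> verts F - {root F}" using fp_edges[OF F] calculation fp_noroot[OF F] by blast
    ultimately show "u = u'" using fp_par[OF F] by blast
  qed
  from tine_cases[OF less(2)] show ?case
  proof
    assume p: "p = [root F]"
    from tine_cases[OF less(3)] show ?thesis
    proof
      assume "q = [root F]" then show ?thesis using p by simp
    next
      assume "\<exists>q' u. q' \<noteq> [] \<and> q = q' @ [u]"
      then obtain q' u where q': "q' \<noteq> []" "q = q' @ [u]" by blast
      then have "(last q', u) \<in> edges F" using tine_snoc[of q' F u] less(3) by simp
      moreover have "u = root F" using q' less(4) p by simp
      ultimately show ?thesis using noroot by blast
    qed
  next
    assume "\<exists>p' u. p' \<noteq> [] \<and> p = p' @ [u]"
    then obtain p' u where p: "p' \<noteq> []" "p = p' @ [u]" by blast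
    then have e1: "(last p', u) \<in> edges F" and t1: "is_tine F p'" using less tine_snoc by blast+
    from tine_cases[OF less(3)] show ?thesis
    proof
      assume "q = [root F]" then show ?thesis using p e1 noroot less(4) by simp
    next
      assume "\<exists>q' u. q' \<noteq> [] \<and> q = q' @ [u]"
      then obtain q' u' where q: "q' \<noteq> []" "q = q' @ [u']" by blast
      then have e2: "(last q', u') \<in> edges F" and t2: "is_tine F q'" using less tine_snoc by blast+
      have "u = u'" using p q less(4) by simp
      then have "last p' = last q'" using uniq e1 e2 by blast
      then have "p' = q'" using less(1)[of p' q'] p t1 t2 by simp
      then show ?thesis using p q \<open>u = u'\<close> by simp
    qed
  qed
qed

lemma tine_len_bound:
  assumes F: "is_fork x F"
  shows "is_tine F p \<Longrightarrow> tine_len p \<le> lab F (last p)"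
proof (induction p rule: rev_induct)
  case Nil then show ?case by (simp add: is_tine_def)
next
  case (snoc u p)
  show ?case
  proof (cases "p = []")
    case True then show ?thesis by (simp add: tine_len_def)
  next
    case False
    then have "is_tine F p" "(last p, u) \<in> edges F" using snoc tine_snoc by blast+
    moreover have "lab F (last p) < lab F u" using fp_inc[OF F] calculation(2) by blast
    ultimately show ?thesis using snoc False by (simp add: tine_len_def)
  qed
qed

lemma max_tine_exists:
  assumes F: "is_fork x F"
  shows "\<exists>p. max_tine F p"
proof -
  let ?S = "tine_len ` {p. is_tine F p}"
  have "last p \<in> verts F" if "is_tine F p" for p using that unfolding is_tine_def
    by (metis last_in_set subsetD)
  then have "?S \<subseteq> {..length x}" using tine_len_bound[OF F] fp_lab[OF F]
    by (metis (no_types, lifting) atMost_iff image_subsetI le_trans mem_Collect_eq)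
  then have fin: "finite ?S" using finite_subset by blast
  have "is_tine F [root F]" using fp_root[OF F] by (simp add: tine_single)
  then have ne: "?S \<noteq> {}" by blast
  obtain p where "is_tine F p" "tine_len p = Max ?S" using Max_in[OF fin ne] by auto
  then show ?thesis unfolding max_tine_def using fin by auto
qed

lemma honest_snoc_T: "honest_idx (x @ [True]) i \<longleftrightarrow> honest_idx x i"
  by (simp add: honest_snoc)

lemma fork_adv:
  assumes F: "is_fork x F"
  shows "is_fork (x @ [True]) F"
proof -
  have l: "\<forall>v\<in>verts F. lab F v \<le> length (x @ [True])" using fp_lab[OF F] by (auto intro: le_SucI)
  show ?thesis unfolding is_fork_def honest_snoc_T
    using fp_fin[OF F] fp_root[OF F] fp_edges[OF F] fp_noroot[OF F] fp_par[OF F] fp_reach[OF F]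
      l fp_lr[OF F] fp_inc[OF F] fp_f3[OF F] fp_f4[OF F]
    by (intro conjI) (assumption+)
qed

lemma fork_init:
  assumes a: "verts A = {root A}" "edges A = {}" "lab A (root A) = 0"
  shows "is_fork [] A"
proof -
  have "is_tine A [root A]" using assms by (simp add: tine_single)
  then have r: "\<forall>v\<in>verts A. \<exists>p. is_tine A p \<and> last p = v" using a(1) by force
  have h: "\<And>i. \<not> honest_idx [] i" unfolding honest_idx_def by simp
  show ?thesis unfolding is_fork_def
    using r h a by (intro conjI) simp_all
qed

lemma fork_hon:
  assumes F: "is_fork x A" and L: "lab A = id" and P: "max_tine A p"
  defines "v \<equiv> Suc (length x)"
  defines "B \<equiv> A\<lparr>verts := insert v (verts A), edges := insert (last p, v) (edges A)\<rparr>"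
  shows "is_fork (x @ [False]) B"
proof -
  have labx: "\<And>u. u \<in> verts A \<Longrightarrow> u \<le> length x" using fp_lab[OF F] L by auto
  have vA: "v \<notin> verts A" using labx by (fastforce simp: v_def)
  have tp: "is_tine A p" using P max_tine_def by blast
  have lp: "last p \<in> verts A" using tp unfolding is_tine_def by (metis last_in_set subsetD)
  have r0: "root A = 0" using fp_lr[OF F] L by simp
  have eA: "edges A \<subseteq> verts A \<times> verts A" using fp_edges[OF F] .
  have [simp]: "verts B = insert v (verts A)" "edges B = insert (last p, v) (edges A)"
    "root B = root A" "lab B = lab A" unfolding B_def by simp_all
  have old: "is_tine B q" if "is_tine A q" for q using that unfolding is_tine_def by auto
  have new: "is_tine A q \<or> (\<exists>q'. is_tine A q' \<and> q = q' @ [v] \<and> last q' = last p)"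
    if "is_tine B q" for q
    using that
  proof (induction q rule: rev_induct)
    case Nil then show ?case by (simp add: is_tine_def)
  next
    case (snoc b q)
    show ?case
    proof (cases "q = []")
      case True then show ?thesis using snoc(2) vA F r0 fp_root[OF F] by (simp add: tine_single)
    next
      case False
      then have tq: "is_tine B q" and e: "(last q, b) \<in> edges B" and bv: "b \<in> verts B"
        using snoc(2) tine_snoc by blast+
      from snoc(1)[OF tq] show ?thesis
      proof
        assume tqA: "is_tine A q"
        show ?thesis
        proof (cases "(last q, b) = (last p, v)")
          case True then show ?thesis using tqA by auto
        next
          case False
          then have "(last q, b) \<in> edges A" using e by auto
          then show ?thesis using tqA eA tine_snoc[OF \<open>q \<noteq> []\<close>] by blast
        qed
      next
        assume "\<exists>q'. is_tine A q' \<and> q = q' @ [v] \<and> last q' = last p"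
        then have "last q = v" by auto
        then show ?thesis using e eA vA lp by auto
      qed
    qed
  qed
  have hon: "\<And>i. honest_idx (x @ [False]) i \<longleftrightarrow> honest_idx x i \<or> i = v"
    using honest_snoc v_def by simp
  have vr: "v \<noteq> root A" using r0 v_def by simp
  show ?thesis unfolding is_fork_def
  proof (intro conjI)
    show "finite (verts B)" using fp_fin[OF F] by simp
    show "root B \<in> verts B" using fp_root[OF F] by simp
    show "edges B \<subseteq> verts B \<times> verts B" using eA lp by auto
    show "\<forall>(u, w)\<in>edges B. w \<noteq> root B" using fp_noroot[OF F] vr by auto
    show "\<forall>w\<in>verts B - {root B}. \<exists>!u. (u, w) \<in> edges B"
    proof
      fix w assume w: "w \<in> verts B - {root B}"
      show "\<exists>!u. (u, w) \<in> edges B"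
      proof (cases "w = v")
        case True then show ?thesis using eA vA by auto
      next
        case False
        then have "w \<in> verts A - {root A}" using w by simp
        then have "\<exists>!u. (u, w) \<in> edges A" using fp_par[OF F] by blast
        then obtain u where u: "(u, w) \<in> edges A" "\<forall>u'. (u', w) \<in> edges A \<longrightarrow> u' = u"
          by (rule ex1E) blast
        have "(u, w) \<in> edges B" using u(1) by simp
        moreover have "\<forall>u'. (u', w) \<in> edges B \<longrightarrow> u' = u"
        proof (intro allI impI)
          fix u' assume "(u', w) \<in> edges B"
          then have "(u', w) \<in> edges A" using False by simp
          then show "u' = u" using u(2) by blast
        qed
        ultimately show ?thesis by blast
      qed
    qed
    show "\<forall>w\<in>verts B. \<exists>q. is_tine B q \<and> last q = w"
    proof
      fix w assume w: "w \<in> verts B"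
      show "\<exists>q. is_tine B q \<and> last q = w"
      proof (cases "w = v")
        case True
        have "p \<noteq> []" using tp unfolding is_tine_def by blast
        then have "is_tine B (p @ [v])" using tine_snoc[of p B v] old[OF tp] by simp
        then show ?thesis using True by force
      next
        case False
        then have "w \<in> verts A" using w by simp
        then obtain q where "is_tine A q" "last q = w" using fp_reach[OF F] by blast
        then show ?thesis using old by blast
      qed
    qed
    show "\<forall>w\<in>verts B. lab B w \<le> length (x @ [False])" using labx L by (auto simp: v_def intro: le_SucI)
    show "lab B (root B) = 0" using fp_lr[OF F] by simp
    show "\<forall>(u, w)\<in>edges B. lab B u < lab B w"
    proof -
      have inc: "\<And>a b. (a, b) \<in> edges A \<Longrightarrow> lab A a < lab A b" using fp_inc[OF F] by blast
      have "last p \<le> length x" using labx lp by blast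
      then have "lab A (last p) < lab A v" using L by (simp add: v_def)
      then show ?thesis using inc by auto
    qed
    show "\<forall>i. honest_idx (x @ [False]) i \<longrightarrow> (\<exists>!w. w \<in> verts B \<and> lab B w = i)"
    proof (intro allI impI)
      fix i assume "honest_idx (x @ [False]) i"
      then have "honest_idx x i \<or> i = v" using hon by simp
      then have "i \<in> verts B"
      proof
        assume "honest_idx x i"
        then have "\<exists>w. w \<in> verts A \<and> lab A w = i" using fp_f3[OF F] by blast
        then obtain w where "w \<in> verts A" "lab A w = i" by blast
        then show ?thesis using L by simp
      qed simp
      then show "\<exists>!w. w \<in> verts B \<and> lab B w = i" using L by (intro ex1I[of _ i]) simp_all
    qed
    show "\<forall>i j q1 q2. honest_idx (x @ [False]) i \<and> honest_idx (x @ [False]) j \<and> i < j \<and>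
        is_tine B q1 \<and> is_tine B q2 \<and> lab B (last q1) = i \<and> lab B (last q2) = j \<longrightarrow>
        tine_len q1 < tine_len q2"
    proof (intro allI impI)
      fix i j q1 q2
      assume H: "honest_idx (x @ [False]) i \<and> honest_idx (x @ [False]) j \<and> i < j \<and>
        is_tine B q1 \<and> is_tine B q2 \<and> lab B (last q1) = i \<and> lab B (last q2) = j"
      have jle: "j \<le> v" using H unfolding honest_idx_def v_def by simp
      have q1A: "is_tine A q1"
      proof (rule ccontr)
        assume "\<not> is_tine A q1"
        then obtain q' where "q1 = q' @ [v]" using new[of q1] H by blast
        then have "i = v" using H L by simp
        then show False using H jle by simp
      qed
      show "tine_len q1 < tine_len q2"
      proof (cases "j = v")
        case True
        have "\<not> is_tine A q2"
        proof
          assume "is_tine A q2"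
          then have "last q2 \<in> verts A" unfolding is_tine_def by (metis last_in_set subsetD)
          moreover have "last q2 = v" using H L True by simp
          ultimately show False using vA by simp
        qed
        then obtain q' where q': "is_tine A q'" "q2 = q' @ [v]" "last q' = last p"
          using new[of q2] H by blast
        then have "q' = p" using tine_unique[OF F] tp by blast
        then have "tine_len q2 = tine_len p + 1" using q' tp
          unfolding tine_len_def is_tine_def by (cases p) auto
        moreover have "tine_len q1 \<le> tine_len p" using P q1A max_tine_def by blast
        ultimately show ?thesis by simp
      next
        case False
        have q2A: "is_tine A q2"
        proof (rule ccontr)
          assume "\<not> is_tine A q2"
          then obtain q' where "q2 = q' @ [v]" using new[of q2] H by blast
          then have "j = v" using H L by simp
          then show False using False by simp
        qed
        have hj: "honest_idx x j" using H hon False by blast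
        have "i \<noteq> v" using H jle by simp
        then have hi: "honest_idx x i" using H hon by blast
        have "lab A (last q1) = i" "lab A (last q2) = j" using H by simp_all
        then show ?thesis using fp_f4[OF F, rule_format, of i j q1 q2] H q1A q2A hi hj by blast
      qed
    qed
  qed
qed

fun build :: "bool list \<Rightarrow> nat \<Rightarrow> fork" where
  "build w 0 = \<lparr>verts = {0}, edges = {}, root = 0, lab = id\<rparr>"
| "build w (Suc t) = (let A = build w t in if w ! t then A else
     A\<lparr>verts := insert (Suc t) (verts A),
       edges := insert (last (SOME p. max_tine A p), Suc t) (edges A)\<rparr>)"

lemma build_lab: "lab (build w t) = id"
  by (induction t) (simp_all add: Let_def)

lemma build_fork: "t \<le> length w \<Longrightarrow> is_fork (take t w) (build w t)"
proof (induction t)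
  case 0
  show ?case by (simp add: fork_init)
next
  case (Suc t)
  then have IH: "is_fork (take t w) (build w t)" by simp
  have tk: "take (Suc t) w = take t w @ [w ! t]" using Suc(2) by (simp add: take_Suc_conv_app_nth)
  have lt: "length (take t w) = t" using Suc(2) by simp
  show ?case
  proof (cases "w ! t")
    case True
    then show ?thesis using tk fork_adv[OF IH] by (simp add: Let_def)
  next
    case False
    have P: "max_tine (build w t) (SOME p. max_tine (build w t) p)"
      using max_tine_exists[OF IH] by (rule someI_ex)
    have "is_fork (take t w @ [False]) ((build w t)\<lparr>verts := insert (Suc (length (take t w))) (verts (build w t)),
       edges := insert (last (SOME p. max_tine (build w t) p), Suc (length (take t w))) (edges (build w t))\<rparr>)"
      by (rule fork_hon[OF IH build_lab P])
    then show ?thesis using tk False lt by (simp add: Let_def)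
  qed
qed

lemma subfork_refl: "subfork F F"
  unfolding subfork_def by simp

lemma build_valid: "valid_play w (build w) (build w)"
  unfolding valid_play_def
proof (intro conjI allI impI)
  show "verts (build w 0) = {root (build w 0)}" by simp
  show "edges (build w 0) = {}" by simp
  show "lab (build w 0) (root (build w 0)) = 0" by simp
  fix t assume t: "1 \<le> t \<and> t \<le> length w"
  then obtain t' where t': "t = Suc t'" by (cases t) auto
  have fk: "is_fork (take t w) (build w t)" using build_fork t by simp
  show "is_fork (take t w) (build w t)" by (rule fk)
  show "is_fork (take t w) (build w t)" by (rule fk)
  show "subfork (build w t) (build w t)" by (rule subfork_refl)
  assume h: "w ! (t - 1)"
  have "build w (t - 1) = build w t" using h t' by (simp add: Let_def)
  then show "subfork (build w (t - 1)) (build w t)"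
    using subfork_refl by simp
next
  fix t assume t: "1 \<le> t \<and> t \<le> length w" and h: "\<not> w ! (t - 1)"
  then obtain t' where t': "t = Suc t'" by (cases t) auto
  let ?A = "build w t'"
  have IH: "is_fork (take t' w) ?A" using build_fork t t' by simp
  have P: "max_tine ?A (SOME p. max_tine ?A p)"
    using max_tine_exists[OF IH] by (rule someI_ex)
  have "\<forall>u\<in>verts ?A. lab ?A u \<le> length (take t' w)" using fp_lab[OF IH] .
  then have nv: "Suc t' \<notin> verts ?A" using build_lab[of w t'] t t' by fastforce
  have eq: "build w (Suc t') = ?A\<lparr>verts := insert (Suc t') (verts ?A),
       edges := insert (last (SOME p. max_tine ?A p), Suc t') (edges ?A)\<rparr>"
    using h t' by (simp add: Let_def)
  show "\<exists>p v. max_tine (build w (t - 1)) p \<and> v \<notin> verts (build w (t - 1)) \<and>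
       verts (build w t) = insert v (verts (build w (t - 1))) \<and>
       edges (build w t) = insert (last p, v) (edges (build w (t - 1))) \<and>
       root (build w t) = root (build w (t - 1)) \<and>
       (\<forall>u\<in>verts (build w (t - 1)). lab (build w t) u = lab (build w (t - 1)) u) \<and>
       lab (build w t) v = t"
    unfolding t' using P nv
    by (intro exI[of _ "SOME p. max_tine ?A p"] exI[of _ "Suc t'"]) (simp del: build.simps add: eq build_lab)
qed

lemma wins_not_settled:
  assumes V: "valid_play w A F" and W: "wins s k w A"
  shows "\<not> settled_for w s k"
proof -
  obtain t where t: "s + k \<le> t" "t \<le> length w" "not_settled_in (A t) s"
    using W unfolding wins_def by blast
  have "is_fork (take t w) (A t)"
  proof (cases "t = 0")
    case True
    then show ?thesis using V unfolding valid_play_def by (simp add: fork_init)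
  next
    case False
    then show ?thesis using V t(2) unfolding valid_play_def by simp
  qed
  then show ?thesis using t unfolding settled_for_def by blast
qed

theorem lemma1:
  fixes s k T :: nat and D :: "bool list pmf"
  assumes "\<forall>w \<in> set_pmf D. length w = T"
  shows "settlement_value D T s k \<le> measure_pmf.prob D {w. \<not> settled_for w s k}"
  unfolding settlement_value_def
proof (rule cSUP_least)
  have "valid_adversary T (\<lambda>w. (build w, build w))"
    unfolding valid_adversary_def using build_valid by simp
  then show "{adv. valid_adversary T adv} \<noteq> {}" by blast
next
  fix adv assume "adv \<in> {adv. valid_adversary T adv}"
  then have V: "\<And>w. length w = T \<Longrightarrow> valid_play w (fst (adv w)) (snd (adv w))"
    unfolding valid_adversary_def by blast
  show "measure_pmf.prob D {w. wins s k w (fst (adv w))} \<le> measure_pmf.prob D {w. \<not> settled_for w s k}"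
  proof (rule measure_pmf.finite_measure_mono_AE)
    show "AE w in measure_pmf D. w \<in> {w. wins s k w (fst (adv w))} \<longrightarrow> w \<in> {w. \<not> settled_for w s k}"
    proof -
      have "\<And>w. w \<in> set_pmf D \<Longrightarrow> wins s k w (fst (adv w)) \<Longrightarrow> \<not> settled_for w s k"
        using assms V wins_not_settled by metis
      then show ?thesis by (auto simp: AE_measure_pmf_iff)
    qed
    show "{w. \<not> settled_for w s k} \<in> sets (measure_pmf D)" by simp
  qed
qed

end
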